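(* If $\mathcal{I}$ is a hereditary weak P-ideal, then $\omega_1$ with the order topology is in $\mathrm{FinBW}(\mathcal{I})$. In particular, there is a non-compact space in $\mathrm{FinBW}(\mathcal{I})$.
   Context: An ideal on an infinite countable set $X$ is a family $\mathcal{I}\subseteq\mathcal{P}(X)$ closed under subsets and finite unions, containing all finite subsets, with $X\notin\mathcal{I}$. $\mathcal{I}|Y=\{A\cap Y:A\in\mathcal{I}\}$. A space $X$ is in $\mathrm{FinBW}(\mathcal{I})$ if $X$ is Hausdorff and for every sequence $(x_n)_{n\in\bigcup\mathcal{I}}$ in $X$ there is $A\notin\mathcal{I}$ with $(x_n)_{n\in A}$ convergent in $X$. $\mathrm{Fin}^2$: ideal on $\omega^2$ of all $A$ with only finitely many $n$ such that $\{m:(n,m)\in A\}$ is infinite. $\mathcal{I}\sqsubseteq\mathcal{J}$: there is a bijection $f:\bigcup\mathcal{J}\to\bigcup\mathcal{I}$ with $f^{-1}[A]\in\mathcal{J}$ for all $A\in\mathcal{I}$. $\mathcal{I}$ is a hereditary weak P-ideal if $\mathrm{Fin}^2\not\sqsubseteq\mathcal{I}|A$ for every $A\notin\mathcal{I}$. *)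

theory Defs
  imports "HOL-Analysis.Analysis" "HOL-Library.Countable_Set"
begin

definition is_ideal :: "'a set \<Rightarrow> 'a set set \<Rightarrow> bool" where
  "is_ideal X I \<longleftrightarrow> I \<subseteq> Pow X
     \<and> (\<forall>A\<in>I. \<forall>B. B \<subseteq> A \<longrightarrow> B \<in> I)
     \<and> (\<forall>A\<in>I. \<forall>B\<in>I. A \<union> B \<in> I)
     \<and> (\<forall>F. finite F \<and> F \<subseteq> X \<longrightarrow> F \<in> I)
     \<and> X \<notin> I"

definition ideal_restr :: "'a set set \<Rightarrow> 'a set \<Rightarrow> 'a set set" where
  "ideal_restr I Y = (\<lambda>A. A \<inter> Y) ` I"

definition Fin2 :: "(nat \<times> nat) set set" where
  "Fin2 = {A. finite {n. infinite {m. (n, m) \<in> A}}}"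

definition ideal_below :: "'a set set \<Rightarrow> 'b set set \<Rightarrow> bool" where
  "ideal_below I J \<longleftrightarrow> (\<exists>f. bij_betw f (\<Union>J) (\<Union>I) \<and> (\<forall>A\<in>I. f -` A \<inter> \<Union>J \<in> J))"

definition hereditary_weak_P :: "'a set set \<Rightarrow> bool" where
  "hereditary_weak_P I \<longleftrightarrow> (\<forall>A. A \<subseteq> \<Union>I \<and> A \<notin> I \<longrightarrow> \<not> ideal_below Fin2 (ideal_restr I A))"

text \<open>FinBW(I): Hausdorff, and every sequence indexed by the carrier of I has a
  subsequence indexed by an I-positive set that converges (along the cofinite filter on A).\<close>
definition FinBW :: "'a set set \<Rightarrow> 'b topology \<Rightarrow> bool" where
  "FinBW I T \<longleftrightarrow> Hausdorff_space T \<and>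
     (\<forall>x. x ` (\<Union>I) \<subseteq> topspace T \<longrightarrow>
        (\<exists>A. A \<subseteq> \<Union>I \<and> A \<notin> I \<and>
           (\<exists>L. limitin T x L (inf cofinite (principal A)))))"

definition ord_topology :: "'c rel \<Rightarrow> 'c topology" where
  "ord_topology r = topology_generated_by
     ({Field r} \<union> {{y \<in> Field r. (x, y) \<in> r \<and> y \<noteq> x} | x. x \<in> Field r}
                \<union> {{y \<in> Field r. (y, x) \<in> r \<and> y \<noteq> x} | x. x \<in> Field r})"

text \<open>r is (a copy of) omega_1: an uncountable well-order all of whose proper
  initial segments are countable.\<close>
definition is_omega1 :: "'c rel \<Rightarrow> bool" where
  "is_omega1 r \<longleftrightarrow> Well_order r \<and> uncountable (Field r)
     \<and> (\<forall>a\<in>Field r. countable (underS r a))"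

end

theory Submission
  imports Defs
begin


lemma ideal_Union: "is_ideal X I \<Longrightarrow> \<Union>I = X"
proof
  assume h: "is_ideal X I"
  show "\<Union>I \<subseteq> X" using h unfolding is_ideal_def by blast
  show "X \<subseteq> \<Union>I"
  proof
    fix x assume "x \<in> X"
    then have "{x} \<in> I" using h unfolding is_ideal_def by blast
    then show "x \<in> \<Union>I" by blast
  qed
qed

lemma ideal_sub: "is_ideal X I \<Longrightarrow> A \<in> I \<Longrightarrow> B \<subseteq> A \<Longrightarrow> B \<in> I"
  unfolding is_ideal_def by blast

lemma ideal_Un: "is_ideal X I \<Longrightarrow> A \<in> I \<Longrightarrow> B \<in> I \<Longrightarrow> A \<union> B \<in> I"
  unfolding is_ideal_def by blast

lemma ideal_fin: "is_ideal X I \<Longrightarrow> finite F \<Longrightarrow> F \<subseteq> X \<Longrightarrow> F \<in> I"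
  unfolding is_ideal_def by blast

lemma ideal_UN: 
  assumes "is_ideal X I" "finite J" shows "(\<forall>j\<in>J. F j \<in> I) \<longrightarrow> (\<Union>j\<in>J. F j) \<in> I"
  using assms(2)
proof induction
  case empty then show ?case using ideal_fin[OF assms(1), of "{}"] by simp
next
  case (insert x F) then show ?case using ideal_Un[OF assms(1)] by auto
qed

lemma comb:
  fixes k :: "'a \<Rightarrow> nat"
  assumes id: "is_ideal X I" and cX: "countable X" and hw: "hereditary_weak_P I"
    and C: "C \<subseteq> X" "C \<notin> I"
    and fib: "\<And>j. {n\<in>C. k n = j} \<in> I"
  shows "\<exists>A\<subseteq>C. A \<notin> I \<and> (\<forall>j. finite {n\<in>A. k n = j})"
proof (rule ccontr)
  assume contra0: "\<not> ?thesis"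
  have contra: "A \<in> I" if "A \<subseteq> C" "\<And>j. finite {n\<in>A. k n = j}" for A
    using contra0 that by blast
  define K where "K = {j. infinite {n\<in>C. k n = j}}"
  define G where "G = {n\<in>C. k n \<notin> K}"
  define H where "H = {n\<in>C. k n \<in> K}"
  have "G \<in> I"
  proof (rule ccontr)
    assume "G \<notin> I"
    moreover have "finite {n\<in>G. k n = j}" for j
    proof (cases "j \<in> K")
      case True then have "{n\<in>G. k n = j} = {}" by (auto simp: G_def)
      then show ?thesis by (metis finite.emptyI)
    next
      case False
      then have "finite {n\<in>C. k n = j}" by (simp add: K_def)
      then show ?thesis by (rule finite_subset[rotated]) (auto simp: G_def)
    qed
    moreover have "G \<subseteq> C" unfolding G_def by auto
    ultimately show False using contra by blast
  qed
  have HI: "H \<notin> I"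
  proof
    assume "H \<in> I"
    then have "G \<union> H \<in> I" using ideal_Un[OF id] \<open>G \<in> I\<close> by blast
    moreover have "G \<union> H = C" unfolding G_def H_def by auto
    ultimately show False using C by simp
  qed
  have Kinf: "infinite K"
  proof
    assume "finite K"
    then have "(\<Union>j\<in>K. {n\<in>C. k n = j}) \<in> I" using ideal_UN[OF id \<open>finite K\<close>, of "\<lambda>j. {n\<in>C. k n = j}"] fib by blast
    moreover have "(\<Union>j\<in>K. {n\<in>C. k n = j}) = H" unfolding H_def by auto
    ultimately show False using HI by simp
  qed
  obtain idx :: "nat \<Rightarrow> nat" where idx: "bij_betw idx K UNIV"
    using countableE_infinite[OF _ Kinf] by blast
  have "\<exists>e :: 'a \<Rightarrow> nat. bij_betw e {n\<in>C. k n = j} UNIV" if "j \<in> K" for j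
  proof -
    have "{n\<in>C. k n = j} \<subseteq> X" using C(1) by auto
    then have "countable {n\<in>C. k n = j}" using cX by (rule countable_subset)
    moreover have "infinite {n\<in>C. k n = j}" using that by (simp add: K_def)
    ultimately obtain e :: "'a \<Rightarrow> nat" where "bij_betw e {n\<in>C. k n = j} UNIV"
      by (rule countableE_infinite)
    then show ?thesis by blast
  qed
  then have "\<forall>j. \<exists>e :: 'a \<Rightarrow> nat. j \<in> K \<longrightarrow> bij_betw e {n\<in>C. k n = j} UNIV" by blast
  then have "\<exists>e :: nat \<Rightarrow> 'a \<Rightarrow> nat. \<forall>j. j \<in> K \<longrightarrow> bij_betw (e j) {n\<in>C. k n = j} UNIV" by (rule choice)
  then obtain e :: "nat \<Rightarrow> 'a \<Rightarrow> nat" where e: "\<And>j. j \<in> K \<Longrightarrow> bij_betw (e j) {n\<in>C. k n = j} UNIV"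
    by blast
  define f where "f n = (idx (k n), e (k n) n)" for n
  have bij: "bij_betw f H UNIV"
    unfolding bij_betw_def
  proof
    show "inj_on f H"
    proof
      fix a b assume ab: "a \<in> H" "b \<in> H" "f a = f b"
      have kK: "k a \<in> K" "k b \<in> K" using ab(1,2) unfolding H_def by auto
      have "idx (k a) = idx (k b)" using ab(3) unfolding f_def by simp
      moreover have "inj_on idx K" using idx by (simp add: bij_betw_def)
      ultimately have kab: "k a = k b" using kK by (simp add: inj_on_def)
      have "e (k a) a = e (k a) b" using ab(3) kab unfolding f_def by simp
      moreover have "inj_on (e (k a)) {n\<in>C. k n = k a}" using e[OF kK(1)] by (simp add: bij_betw_def)
      moreover have "a \<in> {n\<in>C. k n = k a}" "b \<in> {n\<in>C. k n = k a}" using ab(1,2) kab unfolding H_def by auto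
      ultimately show "a = b" by (simp add: inj_on_def)
    qed
    show "f ` H = UNIV"
    proof safe
      fix p q :: nat
      have "p \<in> idx ` K" using idx by (simp add: bij_betw_def)
      then obtain j where j: "j \<in> K" "idx j = p" by blast
      have "q \<in> e j ` {n\<in>C. k n = j}" using e[OF j(1)] by (simp add: bij_betw_def)
      then obtain n where n: "n \<in> {n\<in>C. k n = j}" "e j n = q" by blast
      have "n \<in> H" using n j unfolding H_def by auto
      moreover have "f n = (p, q)" using n j unfolding f_def by auto
      ultimately show "(p, q) \<in> f ` H" by (metis image_eqI)
    qed auto
  qed
  have UF: "\<Union>Fin2 = UNIV"
  proof -
    have "{p} \<in> Fin2" for p
    proof -
      have "finite {m. (n, m) \<in> {p}}" for n
        by (rule finite_subset[of _ "{snd p}"]) auto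
      then have "{n. infinite {m. (n, m) \<in> {p}}} = {}" by blast
      then show ?thesis unfolding Fin2_def by (metis finite.emptyI mem_Collect_eq)
    qed
    then show ?thesis by blast
  qed
  have HX: "H \<subseteq> X" using C(1) unfolding H_def by auto
  have UR: "\<Union>(ideal_restr I H) = H"
  proof
    show "\<Union>(ideal_restr I H) \<subseteq> H" unfolding ideal_restr_def by auto
    show "H \<subseteq> \<Union>(ideal_restr I H)"
    proof
      fix n assume "n \<in> H"
      then have "{n} \<in> I" using ideal_fin[OF id, of "{n}"] HX by auto
      then have "{n} \<inter> H \<in> ideal_restr I H" unfolding ideal_restr_def by blast
      then show "n \<in> \<Union>(ideal_restr I H)" using \<open>n \<in> H\<close> by blast
    qed
  qed
  have pre: "f -` A \<inter> H \<in> ideal_restr I H" if A: "A \<in> Fin2" for A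
  proof -
    define J where "J = {a. infinite {b. (a, b) \<in> A}}"
    have fJ: "finite J" using A unfolding J_def Fin2_def by simp
    define B1 where "B1 = {n \<in> f -` A \<inter> H. idx (k n) \<in> J}"
    define B2 where "B2 = {n \<in> f -` A \<inter> H. idx (k n) \<notin> J}"
    have "B1 \<subseteq> (\<Union>j\<in>{j\<in>K. idx j \<in> J}. {n\<in>C. k n = j})"
      unfolding B1_def H_def by auto
    moreover have "finite {j\<in>K. idx j \<in> J}"
    proof (rule finite_imageD)
      show "finite (idx ` {j\<in>K. idx j \<in> J})" using fJ by (rule finite_subset[rotated]) auto
      show "inj_on idx {j\<in>K. idx j \<in> J}" using idx unfolding bij_betw_def by (rule inj_on_subset[OF conjunct1]) auto
    qed
    ultimately have B1I: "B1 \<in> I" using ideal_UN[OF id, of "{j\<in>K. idx j \<in> J}" "\<lambda>j. {n\<in>C. k n = j}"] fib ideal_sub[OF id] by blast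
    have "finite {n\<in>B2. k n = j}" for j
    proof (cases "j \<in> K \<and> idx j \<notin> J")
      case True
      have "e j ` {n\<in>B2. k n = j} \<subseteq> {b. (idx j, b) \<in> A}"
        unfolding B2_def f_def by auto
      moreover have "finite {b. (idx j, b) \<in> A}" using True unfolding J_def by auto
      moreover have "inj_on (e j) {n\<in>B2. k n = j}"
        using e[of j] True unfolding bij_betw_def B2_def H_def by (auto intro: inj_on_subset)
      ultimately show ?thesis by (meson finite_imageD finite_subset)
    next
      case False
      then have "{n\<in>B2. k n = j} = {}" unfolding B2_def H_def by auto
      then show ?thesis by (metis finite.emptyI)
    qed
    moreover have "B2 \<subseteq> C" unfolding B2_def H_def by auto
    ultimately have "B2 \<in> I" by (rule contra[rotated])
    then have "B1 \<union> B2 \<in> I" using B1I ideal_Un[OF id] by blast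
    moreover have "B1 \<union> B2 = f -` A \<inter> H" unfolding B1_def B2_def by auto
    ultimately have "f -` A \<inter> H \<in> I" by simp
    then have "(f -` A \<inter> H) \<inter> H \<in> ideal_restr I H" unfolding ideal_restr_def by blast
    then show ?thesis by (simp add: Int_absorb2)
  qed
  have "ideal_below Fin2 (ideal_restr I H)"
    unfolding ideal_below_def UF UR using bij pre by blast
  moreover have "H \<subseteq> \<Union>I" using HX ideal_Union[OF id] by simp
  ultimately show False using hw HI unfolding hereditary_weak_P_def by blast
qed



definition ordS :: "'c rel \<Rightarrow> 'c set set" where
  "ordS r = ({Field r} \<union> {{y \<in> Field r. (x, y) \<in> r \<and> y \<noteq> x} | x. x \<in> Field r}
                \<union> {{y \<in> Field r. (y, x) \<in> r \<and> y \<noteq> x} | x. x \<in> Field r})"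

lemma ord_top_eq: "ord_topology r = topology_generated_by (ordS r)"
  unfolding ord_topology_def ordS_def ..

lemma topspace_ord: "topspace (ord_topology r) = Field r"
  unfolding ord_top_eq topology_generated_by_topspace unfolding ordS_def by auto

lemma open_up: "x \<in> Field r \<Longrightarrow> openin (ord_topology r) {y \<in> Field r. (x, y) \<in> r \<and> y \<noteq> x}"
  unfolding ord_top_eq openin_topology_generated_by_iff
  by (rule generate_topology_on.Basis) (auto simp: ordS_def)

lemma open_down: "x \<in> Field r \<Longrightarrow> openin (ord_topology r) {y \<in> Field r. (y, x) \<in> r \<and> y \<noteq> x}"
  unfolding ord_top_eq openin_topology_generated_by_iff
  by (rule generate_topology_on.Basis) (auto simp: ordS_def)

lemma open_nbhd:
  assumes lo: "Linear_order r" and U: "openin (ord_topology r) U"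
    and z: "(z, y) \<in> r" "z \<noteq> y"
  shows "y \<in> U \<Longrightarrow> \<exists>g. (g, y) \<in> r \<and> g \<noteq> y \<and> (\<forall>w. (g, w) \<in> r \<and> g \<noteq> w \<and> (w, y) \<in> r \<longrightarrow> w \<in> U)"
proof -
  have tr: "trans r" and an: "antisym r" and tot: "total_on (Field r) r" and rf: "refl_on (Field r) r"
    using lo unfolding linear_order_on_def partial_order_on_def preorder_on_def by auto
  have "generate_topology_on (ordS r) U" using U unfolding ord_top_eq openin_topology_generated_by_iff .
  then show "y \<in> U \<Longrightarrow> ?thesis"
  proof (induction rule: generate_topology_on.induct)
    case Empty then show ?case by simp
  next
    case (Int a b)
    then obtain g1 g2 where g1: "(g1, y) \<in> r" "g1 \<noteq> y" "\<forall>w. (g1, w) \<in> r \<and> g1 \<noteq> w \<and> (w, y) \<in> r \<longrightarrow> w \<in> a"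
      and g2: "(g2, y) \<in> r" "g2 \<noteq> y" "\<forall>w. (g2, w) \<in> r \<and> g2 \<noteq> w \<and> (w, y) \<in> r \<longrightarrow> w \<in> b"
      by auto
    have g1F: "g1 \<in> Field r" and g2F: "g2 \<in> Field r" using g1 g2 by (auto intro: FieldI1)
    show ?case
    proof (cases "(g1, g2) \<in> r")
      case True
      have "(g1, w) \<in> r \<and> g1 \<noteq> w" if "(g2, w) \<in> r" "g2 \<noteq> w" for w
        using True that tr an unfolding trans_def antisym_def by blast
      then show ?thesis using g1 g2 by (intro exI[of _ g2]) blast
    next
      case False
      have tot': "\<forall>x\<in>Field r. \<forall>y\<in>Field r. x \<noteq> y \<longrightarrow> (x, y) \<in> r \<or> (y, x) \<in> r" and rf': "\<forall>x\<in>Field r. (x, x) \<in> r"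
        using tot rf unfolding total_on_def refl_on_def by auto
      have "(g2, g1) \<in> r" using False tot' rf' g1F g2F by metis
      have "(g2, w) \<in> r \<and> g2 \<noteq> w" if "(g1, w) \<in> r" "g1 \<noteq> w" for w
        using \<open>(g2, g1) \<in> r\<close> that tr an unfolding trans_def antisym_def by blast
      then show ?thesis using g1 g2 by (intro exI[of _ g1]) blast
    qed
  next
    case (UN K)
    then obtain k where "k \<in> K" "y \<in> k" by blast
    with UN.IH[of k] show ?case by blast
  next
    case (Basis s)
    then consider "s = Field r" | x where "x \<in> Field r" "s = {y \<in> Field r. (x, y) \<in> r \<and> y \<noteq> x}"
      | x where "x \<in> Field r" "s = {y \<in> Field r. (y, x) \<in> r \<and> y \<noteq> x}"
      unfolding ordS_def by blast
    then show ?case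
    proof cases
      case 1 then show ?thesis using z by (intro exI[of _ z]) (auto intro: FieldI2)
    next
      case (2 x) then show ?thesis using Basis.prems by (intro exI[of _ x]) (auto intro: FieldI2)
    next
      case (3 x)
      have "(w, x) \<in> r \<and> w \<noteq> x" if "(w, y) \<in> r" for w
        using that 3 Basis.prems tr an unfolding trans_def antisym_def by blast
      then show ?thesis using z 3 by (intro exI[of _ z]) (auto intro: FieldI2)
    qed
  qed
qed

lemma ord_limit:
  assumes lo: "Linear_order r" and b: "b \<in> Field r"
    and A: "\<And>n. n \<in> A \<Longrightarrow> x n \<in> Field r \<and> (x n, b) \<in> r"
    and fin: "\<And>g. (g, b) \<in> r \<Longrightarrow> g \<noteq> b \<Longrightarrow> finite {n\<in>A. (x n, g) \<in> r}"
  shows "limitin (ord_topology r) x b (inf cofinite (principal A))"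
  unfolding limitin_def topspace_ord
proof (intro conjI allI impI)
  show "b \<in> Field r" by fact
  have tr: "trans r" and an: "antisym r" and tot: "total_on (Field r) r" and rf: "refl_on (Field r) r"
    using lo unfolding linear_order_on_def partial_order_on_def preorder_on_def by auto
  fix U assume U: "openin (ord_topology r) U \<and> b \<in> U"
  have "finite {n\<in>A. x n \<notin> U}"
  proof (cases "\<exists>z. (z, b) \<in> r \<and> z \<noteq> b")
    case True
    then obtain z where "(z, b) \<in> r" "z \<noteq> b" by blast
    from open_nbhd[OF lo _ this] U obtain g where
      g: "(g, b) \<in> r" "g \<noteq> b" "\<forall>w. (g, w) \<in> r \<and> g \<noteq> w \<and> (w, b) \<in> r \<longrightarrow> w \<in> U" by blast
    have gF: "g \<in> Field r" using g by (auto intro: FieldI1)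
    have "{n\<in>A. x n \<notin> U} \<subseteq> {n\<in>A. (x n, g) \<in> r}"
    proof safe
      fix n assume n: "n \<in> A" "x n \<notin> U"
      show "(x n, g) \<in> r"
      proof (rule ccontr)
        assume "(x n, g) \<notin> r"
        have tot': "\<forall>x\<in>Field r. \<forall>y\<in>Field r. x \<noteq> y \<longrightarrow> (x, y) \<in> r \<or> (y, x) \<in> r" and rf': "\<forall>x\<in>Field r. (x, x) \<in> r"
          using tot rf unfolding total_on_def refl_on_def by auto
        have xF: "x n \<in> Field r" using A[OF n(1)] by blast
        have "(g, x n) \<in> r" using \<open>(x n, g) \<notin> r\<close> tot' rf' gF xF by metis
        moreover have "g \<noteq> x n" using \<open>(x n, g) \<notin> r\<close> rf' gF by metis
        ultimately have "(g, x n) \<in> r" "g \<noteq> x n" by auto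
        then show False using g A[OF n(1)] n by blast
      qed
    qed
    then show ?thesis using fin[OF g(1,2)] finite_subset by blast
  next
    case False
    then have "{n\<in>A. x n \<notin> U} = {}" using A U by blast
    then show ?thesis by (metis finite.emptyI)
  qed
  then show "eventually (\<lambda>n. x n \<in> U) (inf cofinite (principal A))"
    unfolding eventually_inf eventually_cofinite eventually_principal
    by (intro exI[of _ "\<lambda>n. n \<in> A \<longrightarrow> x n \<in> U"] exI[of _ "\<lambda>n. n \<in> A"]) auto
qed

lemma ord_hausdorff:
  assumes lo: "Linear_order r"
  shows "Hausdorff_space (ord_topology r)"
proof -
  have tr: "trans r" and an: "antisym r" and tot: "total_on (Field r) r" and rf: "refl_on (Field r) r"
    using lo unfolding linear_order_on_def partial_order_on_def preorder_on_def by auto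
  have main: "\<exists>U V. openin (ord_topology r) U \<and> openin (ord_topology r) V \<and> a \<in> U \<and> b \<in> V \<and> disjnt U V"
    if ab: "a \<in> Field r" "b \<in> Field r" "(a, b) \<in> r" "a \<noteq> b" for a b
  proof (cases "\<exists>c. (a, c) \<in> r \<and> a \<noteq> c \<and> (c, b) \<in> r \<and> c \<noteq> b")
    case True
    then obtain c where c: "(a, c) \<in> r" "a \<noteq> c" "(c, b) \<in> r" "c \<noteq> b" by blast
    have cF: "c \<in> Field r" using c by (auto intro: FieldI2)
    have "disjnt {y \<in> Field r. (y, c) \<in> r \<and> y \<noteq> c} {y \<in> Field r. (c, y) \<in> r \<and> y \<noteq> c}"
      unfolding disjnt_def using an unfolding antisym_def by blast
    then show ?thesis using open_up[OF cF] open_down[OF cF] ab c by blast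
  next
    case False
    have "disjnt {y \<in> Field r. (y, b) \<in> r \<and> y \<noteq> b} {y \<in> Field r. (a, y) \<in> r \<and> y \<noteq> a}"
    proof -
      have "False" if "(y, b) \<in> r" "y \<noteq> b" "(a, y) \<in> r" "y \<noteq> a" for y
        using False that by blast
      then show ?thesis unfolding disjnt_def by blast
    qed
    then show ?thesis using open_up[OF ab(1)] open_down[OF ab(2)] ab by blast
  qed
  show ?thesis unfolding Hausdorff_space_def topspace_ord
  proof (intro allI impI)
    fix a b assume h: "a \<in> Field r \<and> b \<in> Field r \<and> a \<noteq> b"
    show "\<exists>U V. openin (ord_topology r) U \<and> openin (ord_topology r) V \<and> a \<in> U \<and> b \<in> V \<and> disjnt U V"
    proof (cases "(a, b) \<in> r")
      case True then show ?thesis using main h by blast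
    next
      case False
      then have "(b, a) \<in> r" using tot h unfolding total_on_def by blast
      then obtain U V where "openin (ord_topology r) U" "openin (ord_topology r) V" "b \<in> U" "a \<in> V" "disjnt U V"
        using main h by blast
      then show ?thesis by (metis disjnt_sym)
    qed
  qed
qed



lemma lin_facts:
  assumes "Well_order r"
  shows "trans r" "antisym r" "\<forall>x\<in>Field r. \<forall>y\<in>Field r. x \<noteq> y \<longrightarrow> (x, y) \<in> r \<or> (y, x) \<in> r"
    "\<forall>x\<in>Field r. (x, x) \<in> r" "wf (r - Id)" "Linear_order r"
  using assms unfolding well_order_on_def linear_order_on_def partial_order_on_def preorder_on_def
    total_on_def refl_on_def by auto

lemma bound:
  assumes wo: "Well_order r" and unc: "uncountable (Field r)"
    and cs: "\<forall>a\<in>Field r. countable (underS r a)" and S: "countable S" "S \<subseteq> Field r"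
  shows "\<exists>a\<in>Field r. \<forall>s\<in>S. (s, a) \<in> r"
proof (rule ccontr)
  assume "\<not> ?thesis"
  then have h: "\<forall>a\<in>Field r. \<exists>s\<in>S. (s, a) \<notin> r" by blast
  note lf = lin_facts[OF wo]
  have "Field r \<subseteq> (\<Union>s\<in>S. insert s (underS r s))"
  proof
    fix a assume a: "a \<in> Field r"
    then obtain s where s: "s \<in> S" "(s, a) \<notin> r" using h by blast
    have "s \<in> Field r" using s S by blast
    then have "(a, s) \<in> r" "a \<noteq> s" using lf(3,4) a s by metis+
    then have "a \<in> underS r s" by (simp add: underS_def)
    then show "a \<in> (\<Union>s\<in>S. insert s (underS r s))" using s by blast
  qed
  moreover have "countable (\<Union>s\<in>S. insert s (underS r s))"
    using S cs by (intro countable_UN) auto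
  ultimately show False using unc countable_subset by blast
qed

lemma omega1_FinBW:
  assumes id: "is_ideal X I" and cX: "countable X" and hw: "hereditary_weak_P I"
    and om: "is_omega1 r"
  shows "FinBW I (ord_topology r)"
  unfolding FinBW_def
proof (intro conjI allI impI)
  have wo: "Well_order r" and unc: "uncountable (Field r)" and cs: "\<forall>a\<in>Field r. countable (underS r a)"
    using om unfolding is_omega1_def by auto
  note lf = lin_facts[OF wo]
  show "Hausdorff_space (ord_topology r)" by (rule ord_hausdorff[OF lf(6)])
  have UI: "\<Union>I = X" using ideal_Union[OF id] .
  fix x assume "x ` \<Union>I \<subseteq> topspace (ord_topology r)"
  then have "x ` X \<subseteq> Field r" by (simp only: UI topspace_ord)
  then have xF: "\<And>n. n \<in> X \<Longrightarrow> x n \<in> Field r" by blast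
  have XI: "X \<notin> I" using id unfolding is_ideal_def by blast
  obtain a where a: "a \<in> Field r" "\<forall>s\<in>x ` X. (s, a) \<in> r"
    using bound[OF wo unc cs, of "x ` X"] cX xF by blast
  define P where "P = {b\<in>Field r. {n\<in>X. (x n, b) \<in> r} \<notin> I}"
  have "{n\<in>X. (x n, a) \<in> r} = X" using a by auto
  then have "a \<in> P" unfolding P_def using a XI by simp
  obtain b where b: "b \<in> P" "\<And>c. (c, b) \<in> r - Id \<Longrightarrow> c \<notin> P"
    using wfE_min[OF lf(5) \<open>a \<in> P\<close>] by blast
  have bF: "b \<in> Field r" using b(1) P_def by blast
  have minb: "{n\<in>X. (x n, c) \<in> r} \<in> I" if "(c, b) \<in> r" "c \<noteq> b" for c
  proof -
    have "c \<in> Field r" using that by (auto intro: FieldI1)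
    moreover have "c \<notin> P" using b(2) that by blast
    ultimately show ?thesis unfolding P_def by blast
  qed
  define F where "F = {n\<in>X. x n = b}"
  show "\<exists>A. A \<subseteq> \<Union>I \<and> A \<notin> I \<and> (\<exists>L. limitin (ord_topology r) x L (inf cofinite (principal A)))"
  proof (cases "F \<in> I")
    case False
    have "limitin (ord_topology r) x b (inf cofinite (principal F))"
    proof (rule ord_limit[OF lf(6) bF])
      show "x n \<in> Field r \<and> (x n, b) \<in> r" if "n \<in> F" for n
        using that bF lf(4) unfolding F_def by auto
      show "finite {n\<in>F. (x n, g) \<in> r}" if "(g, b) \<in> r" "g \<noteq> b" for g
      proof -
        have "{n\<in>F. (x n, g) \<in> r} = {}" using that lf(2) unfolding F_def antisym_def by auto
        then show ?thesis by (metis finite.emptyI)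
      qed
    qed
    moreover have "F \<subseteq> \<Union>I" using UI unfolding F_def by auto
    ultimately show ?thesis using False by blast
  next
    case True
    define C where "C = {n\<in>X. (x n, b) \<in> r \<and> x n \<noteq> b}"
    have CX: "C \<subseteq> X" unfolding C_def by auto
    have nb: "{n\<in>X. (x n, b) \<in> r} \<notin> I" using b(1) unfolding P_def by blast
    have CI: "C \<notin> I"
    proof
      assume "C \<in> I"
      then have "C \<union> F \<in> I" using True ideal_Un[OF id] by blast
      moreover have "{n\<in>X. (x n, b) \<in> r} \<subseteq> C \<union> F" unfolding C_def F_def by auto
      ultimately show False using nb ideal_sub[OF id] by blast
    qed
    have "C \<noteq> {}"
    proof
      assume "C = {}"
      then have "C \<in> I" using ideal_fin[OF id, of "{}"] by simp
      then show False using CI by simp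
    qed
    then obtain n0 where "n0 \<in> C" by blast
    define U where "U = underS r b"
    have xU: "x n \<in> U" if "n \<in> C" for n using that unfolding C_def U_def underS_def by auto
    have "U \<noteq> {}" using xU[OF \<open>n0 \<in> C\<close>] by blast
    have cU: "countable U" using cs bF unfolding U_def by blast
    define e where "e = from_nat_into U"
    have rangee: "range e = U" unfolding e_def using \<open>U \<noteq> {}\<close> cU by simp
    define k where "k n = (LEAST j. (x n, e j) \<in> r)" for n
    have kprop: "(x n, e (k n)) \<in> r" if nC: "n \<in> C" for n
    proof -
      have "x n \<in> range e" using xU[OF nC] rangee by simp
      then obtain j where "e j = x n" by (metis imageE)
      then have "(x n, e j) \<in> r" using lf(4) xF[of n] nC CX by auto
      then show ?thesis unfolding k_def by (rule LeastI)
    qed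
    have eU: "(e j, b) \<in> r" "e j \<noteq> b" for j
      using rangee unfolding U_def underS_def by auto
    have fib: "{n\<in>C. k n = j} \<in> I" for j
    proof -
      have "{n\<in>C. k n = j} \<subseteq> {n\<in>X. (x n, e j) \<in> r}" using kprop CX by auto
      then show ?thesis using minb[OF eU] ideal_sub[OF id] by blast
    qed
    obtain A where A: "A \<subseteq> C" "A \<notin> I" "\<And>j. finite {n\<in>A. k n = j}"
      using comb[OF id cX hw CX CI fib] by blast
    have "limitin (ord_topology r) x b (inf cofinite (principal A))"
    proof (rule ord_limit[OF lf(6) bF])
      show "x n \<in> Field r \<and> (x n, b) \<in> r" if "n \<in> A" for n
        using that A(1) xF CX unfolding C_def by auto
      show "finite {n\<in>A. (x n, g) \<in> r}" if "(g, b) \<in> r" "g \<noteq> b" for g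
      proof -
        have "g \<in> U" using that unfolding U_def underS_def by auto
        then obtain j where j: "g = e j" using rangee by (metis imageE)
        have "{n\<in>A. (x n, g) \<in> r} \<subseteq> (\<Union>i\<in>{..j}. {n\<in>A. k n = i})"
        proof
          fix n assume "n \<in> {n\<in>A. (x n, g) \<in> r}"
          then have "n \<in> A" "(x n, e j) \<in> r" using j by auto
          moreover have "k n \<le> j" unfolding k_def using \<open>(x n, e j) \<in> r\<close> by (rule Least_le)
          ultimately show "n \<in> (\<Union>i\<in>{..j}. {n\<in>A. k n = i})" by auto
        qed
        moreover have "finite (\<Union>i\<in>{..j}. {n\<in>A. k n = i})" using A(3) by blast
        ultimately show ?thesis by (rule finite_subset)
      qed
    qed
    moreover have "A \<subseteq> \<Union>I" using A(1) CX UI by auto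
    ultimately show ?thesis using A(2) by blast
  qed
qed

lemma omega1_not_compact:
  assumes om: "is_omega1 r"
  shows "\<not> compact_space (ord_topology r)"
proof
  assume cpt: "compact_space (ord_topology r)"
  have wo: "Well_order r" and unc: "uncountable (Field r)" and cs: "\<forall>a\<in>Field r. countable (underS r a)"
    using om unfolding is_omega1_def by auto
  note lf = lin_facts[OF wo]
  define U where "U = {{y \<in> Field r. (y, a) \<in> r \<and> y \<noteq> a} | a. a \<in> Field r}"
  have Uo: "\<forall>u\<in>U. openin (ord_topology r) u"
  proof
    fix u assume "u \<in> U"
    then obtain a where "a \<in> Field r" "u = {y \<in> Field r. (y, a) \<in> r \<and> y \<noteq> a}" unfolding U_def by blast
    then show "openin (ord_topology r) u" using open_down by simp
  qed
  have cov: "Field r \<subseteq> \<Union>U"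
  proof
    fix y assume y: "y \<in> Field r"
    have "countable (insert y (underS r y))" using cs y by simp
    then have "\<not> Field r \<subseteq> insert y (underS r y)" using unc countable_subset by blast
    then obtain a where a: "a \<in> Field r" "a \<noteq> y" "a \<notin> underS r y" by blast
    then have "(a, y) \<notin> r" by (simp add: underS_def)
    then have "(y, a) \<in> r" using lf(3) a y by metis
    then have "y \<in> {z \<in> Field r. (z, a) \<in> r \<and> z \<noteq> a}" using y a by auto
    moreover have "{z \<in> Field r. (z, a) \<in> r \<and> z \<noteq> a} \<in> U" using a unfolding U_def by blast
    ultimately show "y \<in> \<Union>U" by blast
  qed
  have "\<forall>\<U>. (\<forall>u\<in>\<U>. openin (ord_topology r) u) \<and> Field r \<subseteq> \<Union>\<U> \<longrightarrow> (\<exists>\<F>. finite \<F> \<and> \<F> \<subseteq> \<U> \<and> Field r \<subseteq> \<Union>\<F>)"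
    using cpt unfolding compact_space_def compactin_def topspace_ord by blast
  then have "\<exists>\<F>. finite \<F> \<and> \<F> \<subseteq> U \<and> Field r \<subseteq> \<Union>\<F>" using Uo cov by blast
  then obtain G where G: "finite G" "G \<subseteq> U" "Field r \<subseteq> \<Union>G" by blast
  have "countable u" if uU: "u \<in> U" for u
  proof -
    obtain a where a: "a \<in> Field r" "u = {y \<in> Field r. (y, a) \<in> r \<and> y \<noteq> a}" using uU unfolding U_def by blast
    then have "u \<subseteq> underS r a" unfolding underS_def by auto
    then show ?thesis using cs a(1) countable_subset by blast
  qed
  then have "countable (\<Union>u\<in>G. u)" using G by (intro countable_UN) (auto intro: countable_finite)
  then have "countable (\<Union>G)" by simp
  then show False using G(3) unc countable_subset by blast
qed

lemma nat_set_uncountable: "uncountable (UNIV :: nat set set)"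
proof
  assume c: "countable (UNIV :: nat set set)"
  define g where "g = from_nat_into (UNIV :: nat set set)"
  have "range g = UNIV" unfolding g_def using c by simp
  then obtain m where m: "g m = {n. n \<notin> g n}" by (metis UNIV_I imageE)
  show False using m by blast
qed

lemma ex_omega1: "\<exists>r :: (nat set) rel. is_omega1 r"
proof -
  obtain r0 :: "nat set rel" where wo0: "well_order_on UNIV r0" using well_order_on by blast
  have F0: "Field r0 = UNIV" using well_order_on_Field[OF wo0] by simp
  have wo: "Well_order r0" using wo0 F0 by simp
  note lf = lin_facts[OF wo]
  define W where "W = {a. countable (underS r0 a)}"
  have Wunc: "uncountable W"
  proof
    assume cW: "countable W"
    then have "W \<noteq> UNIV" using nat_set_uncountable by auto
    then obtain a0 where "a0 \<in> UNIV - W" by blast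
    then obtain a where a: "a \<in> UNIV - W" "\<And>c. (c, a) \<in> r0 - Id \<Longrightarrow> c \<notin> UNIV - W"
      using wfE_min[OF lf(5) \<open>a0 \<in> UNIV - W\<close>] by blast
    have "underS r0 a \<subseteq> W"
    proof
      fix c assume "c \<in> underS r0 a"
      then have "(c, a) \<in> r0 - Id" unfolding underS_def by auto
      then show "c \<in> W" using a(2) by blast
    qed
    then have "countable (underS r0 a)" using cW by (rule countable_subset)
    then have "a \<in> W" unfolding W_def by simp
    then show False using a(1) by blast
  qed
  define r where "r = Restr r0 W"
  have wor: "Well_order r" unfolding r_def using wo by (rule Well_order_Restr)
  have Fr: "Field r = W"
  proof
    show "Field r \<subseteq> W" unfolding r_def by (rule Field_Restr_subset)
    show "W \<subseteq> Field r"
    proof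
      fix w assume "w \<in> W"
      moreover have "(w, w) \<in> r0" using lf(4) F0 by auto
      ultimately have "(w, w) \<in> r" unfolding r_def by auto
      then show "w \<in> Field r" by (rule FieldI1)
    qed
  qed
  have "countable (underS r a)" if "a \<in> Field r" for a
  proof -
    have "underS r a \<subseteq> underS r0 a" unfolding r_def underS_def by auto
    moreover have "countable (underS r0 a)" using that Fr unfolding W_def by auto
    ultimately show ?thesis by (rule countable_subset)
  qed
  then have "is_omega1 r" unfolding is_omega1_def using wor Fr Wunc by auto
  then show ?thesis by blast
qed

theorem proposition6p1:
  fixes X :: "'a set" and I :: "'a set set" and r :: "'c rel"
  assumes "is_ideal X I" and "countable X" and "infinite X"
    and "hereditary_weak_P I"
    and "is_omega1 r"
  shows "FinBW I (ord_topology r)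
         \<and> (\<exists>T :: nat set topology. FinBW I T \<and> \<not> compact_space T)"
proof
  show "FinBW I (ord_topology r)" using omega1_FinBW assms by blast
  obtain r' :: "nat set rel" where "is_omega1 r'" using ex_omega1 by blast
  then have "FinBW I (ord_topology r') \<and> \<not> compact_space (ord_topology r')"
    using omega1_FinBW[OF assms(1,2,4)] omega1_not_compact by blast
  then show "\<exists>T :: nat set topology. FinBW I T \<and> \<not> compact_space T" by blast
qed

end
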